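(* Let $S$ be a semigroup with finite $\mathcal{R}$-height whose kernel is completely simple, and let $B$ be a bi-ideal of $S$. Then $\mathrm{H}_{\mathcal{R}}(B)\leq 3\,\mathrm{H}_{\mathcal{R}}(S)-2$.
   Context: For a semigroup $S$, $S^1$ denotes $S$ with an identity adjoined if necessary. Green's preorder: $a\leq_{\mathcal{R}} b$ iff $aS^1\subseteq bS^1$; $\mathcal{R}$ is the associated equivalence; the $\mathcal{R}$-height $\mathrm{H}_{\mathcal{R}}$ of a semigroup is the supremum of the cardinalities of chains in its poset of $\mathcal{R}$-classes. A bi-ideal is a non-empty subset $B$ with $BS^1B\subseteq B$; $\mathrm{H}_{\mathcal{R}}(B)$ is computed in $B$ itself. The kernel of $S$ is its unique minimal ideal; a semigroup is completely simple if it has no proper ideals and has both a minimal right ideal and a minimal left ideal. *)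

theory Defs
  imports Main "HOL-Library.Extended_Nat"
begin

text \<open>The ambient semigroup S is the type 'a of class semigroup_mult (S = UNIV).
  Notions relative to a subsemigroup T (given as a carrier set) are computed inside T.\<close>

definition R_le :: "'a::semigroup_mult set \<Rightarrow> 'a \<Rightarrow> 'a \<Rightarrow> bool" where
  "R_le T a b \<longleftrightarrow> a = b \<or> (\<exists>t\<in>T. a = b * t)"

definition R_equiv :: "'a::semigroup_mult set \<Rightarrow> 'a \<Rightarrow> 'a \<Rightarrow> bool" where
  "R_equiv T a b \<longleftrightarrow> R_le T a b \<and> R_le T b a"

definition R_classes :: "'a::semigroup_mult set \<Rightarrow> 'a set set" where
  "R_classes T = {{y\<in>T. R_equiv T x y} | x. x \<in> T}"

definition R_class_le :: "'a::semigroup_mult set \<Rightarrow> 'a set \<Rightarrow> 'a set \<Rightarrow> bool" where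
  "R_class_le T X Y \<longleftrightarrow> (\<exists>x\<in>X. \<exists>y\<in>Y. R_le T x y)"

text \<open>R-height: supremum of cardinalities of chains in the poset of R-classes
  (infinite chains contain finite chains of every size, so finite chains suffice).\<close>
definition R_height :: "'a::semigroup_mult set \<Rightarrow> enat" where
  "R_height T = Sup {enat (card C) | C. C \<subseteq> R_classes T \<and> finite C \<and>
      (\<forall>X\<in>C. \<forall>Y\<in>C. R_class_le T X Y \<or> R_class_le T Y X)}"

definition ideal_in :: "'a::semigroup_mult set \<Rightarrow> 'a set \<Rightarrow> bool" where
  "ideal_in T I \<longleftrightarrow> I \<noteq> {} \<and> I \<subseteq> T \<and> (\<forall>x\<in>I. \<forall>t\<in>T. x * t \<in> I \<and> t * x \<in> I)"

definition right_ideal_in :: "'a::semigroup_mult set \<Rightarrow> 'a set \<Rightarrow> bool" where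
  "right_ideal_in T I \<longleftrightarrow> I \<noteq> {} \<and> I \<subseteq> T \<and> (\<forall>x\<in>I. \<forall>t\<in>T. x * t \<in> I)"

definition left_ideal_in :: "'a::semigroup_mult set \<Rightarrow> 'a set \<Rightarrow> bool" where
  "left_ideal_in T I \<longleftrightarrow> I \<noteq> {} \<and> I \<subseteq> T \<and> (\<forall>x\<in>I. \<forall>t\<in>T. t * x \<in> I)"

definition completely_simple :: "'a::semigroup_mult set \<Rightarrow> bool" where
  "completely_simple T \<longleftrightarrow>
     (\<forall>I. ideal_in T I \<longrightarrow> I = T) \<and>
     (\<exists>R. right_ideal_in T R \<and> (\<forall>R'. right_ideal_in T R' \<and> R' \<subseteq> R \<longrightarrow> R' = R)) \<and>
     (\<exists>L. left_ideal_in T L \<and> (\<forall>L'. left_ideal_in T L' \<and> L' \<subseteq> L \<longrightarrow> L' = L))"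

definition is_kernel :: "'a::semigroup_mult set \<Rightarrow> bool" where
  "is_kernel K \<longleftrightarrow> ideal_in UNIV K \<and> (\<forall>I. ideal_in UNIV I \<longrightarrow> K \<subseteq> I)"

definition bi_ideal :: "'a::semigroup_mult set \<Rightarrow> bool" where
  "bi_ideal B \<longleftrightarrow> B \<noteq> {} \<and> (\<forall>b\<in>B. \<forall>b'\<in>B. b * b' \<in> B \<and> (\<forall>s. b * s * b' \<in> B))"

end

theory Submission
  imports Defs
begin

lemma ideal_cl:
  assumes "ideal_in UNIV K" "x \<in> K"
  shows "x * t \<in> K" "t * x \<in> K"
  using assms unfolding ideal_in_def by auto

lemma cs_simple:
  assumes "completely_simple K" "ideal_in K I" shows "I = K"
proof -
  have "\<forall>I. ideal_in K I \<longrightarrow> I = K" using assms(1) unfolding completely_simple_def by (elim conjE) assumption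
  thus ?thesis using assms(2) by blast
qed

lemma cs_R:
  assumes "completely_simple K"
  shows "\<exists>R. right_ideal_in K R \<and> (\<forall>R'. right_ideal_in K R' \<and> R' \<subseteq> R \<longrightarrow> R' = R)"
  using assms unfolding completely_simple_def by (elim conjE) assumption

lemma cs_L:
  assumes "completely_simple K"
  shows "\<exists>L. left_ideal_in K L \<and> (\<forall>L'. left_ideal_in K L' \<and> L' \<subseteq> L \<longrightarrow> L' = L)"
  using assms unfolding completely_simple_def by (elim conjE) assumption

lemma cs_pap:
  assumes KI: "ideal_in UNIV K" and cs: "completely_simple K" and a: "a \<in> K"
  shows "\<exists>p\<in>K. \<exists>q\<in>K. a = p*a*q"
proof -
  let ?I = "{p*a*q | p q. p \<in> K \<and> q \<in> K}"
  have ne: "?I \<noteq> {}" using a by blast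
  have sub: "?I \<subseteq> K" using a ideal_cl[OF KI] by blast
  have cl: "x*t \<in> ?I \<and> t*x \<in> ?I" if "x \<in> ?I" "t \<in> K" for x t
  proof -
    note hyp = that
    obtain p q where pq: "x = p*a*q" "p\<in>K" "q\<in>K" using hyp by blast
    have "x*t = p*a*(q*t)" "t*x = (t*p)*a*q" using pq by (simp_all add: mult.assoc)
    moreover have "q*t \<in> K" "t*p \<in> K" using pq hyp ideal_cl[OF KI] by auto
    ultimately show ?thesis using pq by blast
  qed
  have "ideal_in K ?I" unfolding ideal_in_def using ne sub cl by blast
  hence "?I = K" using cs_simple[OF cs] by blast
  with a show ?thesis by blast
qed

lemma cs_right:
  assumes KI: "ideal_in UNIV K" and cs: "completely_simple K" and a: "a \<in> K"
    and J: "right_ideal_in K J" "J \<subseteq> {a*t | t. t \<in> K}"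
  shows "{a*t | t. t \<in> K} \<subseteq> J"
proof -
  obtain R where R: "right_ideal_in K R" "\<And>R'. right_ideal_in K R' \<Longrightarrow> R' \<subseteq> R \<Longrightarrow> R' = R"
    using cs_R[OF cs] by blast
  have RK: "R \<subseteq> K" "R \<noteq> {}" and Rcl: "\<And>r t. r \<in> R \<Longrightarrow> t \<in> K \<Longrightarrow> r*t \<in> R"
    using R(1) unfolding right_ideal_in_def by auto
  let ?I = "{k*r | k r. k \<in> K \<and> r \<in> R}"
  have ne: "?I \<noteq> {}" using a RK by blast
  have sub: "?I \<subseteq> K" using RK ideal_cl[OF KI] by blast
  have cl: "x*t \<in> ?I \<and> t*x \<in> ?I" if "x \<in> ?I" "t \<in> K" for x t
  proof -
    note hyp = that
    obtain k r where pq: "x = k*r" "k\<in>K" "r\<in>R" using hyp by blast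
    have "x*t = k*(r*t)" "t*x = (t*k)*r" using pq by (simp_all add: mult.assoc)
    moreover have "r*t \<in> R" "t*k \<in> K" using pq hyp ideal_cl[OF KI] Rcl by auto
    ultimately show ?thesis using pq by blast
  qed
  have "ideal_in K ?I" unfolding ideal_in_def using ne sub cl by blast
  hence "?I = K" using cs_simple[OF cs] by blast
  then obtain k r where kr: "a = k*r" "k \<in> K" "r \<in> R" using a by blast
  let ?R' = "{r'\<in>R. k*r' \<in> J}"
  have Jne: "J \<noteq> {}" and Jcl: "\<And>j t. j \<in> J \<Longrightarrow> t \<in> K \<Longrightarrow> j*t \<in> J"
    using J(1) unfolding right_ideal_in_def by auto
  have "?R' \<noteq> {}"
  proof -
    obtain j where "j \<in> J" using Jne by blast
    then obtain t where t: "j = a*t" "t \<in> K" using J(2) by blast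
    have "j = k*(r*t)" using t kr by (simp add: mult.assoc)
    moreover have "r*t \<in> R" using Rcl kr t by auto
    ultimately show ?thesis using \<open>j \<in> J\<close> by blast
  qed
  moreover have "?R' \<subseteq> K" using RK by blast
  moreover have "x*t \<in> ?R'" if "x \<in> ?R'" "t \<in> K" for x t
  proof -
    note hyp = that
    have "k*(x*t) = (k*x)*t" by (simp add: mult.assoc)
    thus ?thesis using hyp Rcl Jcl by auto
  qed
  ultimately have "right_ideal_in K ?R'" unfolding right_ideal_in_def by blast
  hence eq: "?R' = R" using R(2) by blast
  show ?thesis
  proof
    fix x assume "x \<in> {a*t | t. t \<in> K}"
    then obtain t where t: "x = a*t" "t \<in> K" by blast
    have "x = k*(r*t)" using t kr by (simp add: mult.assoc)
    moreover have "r*t \<in> R" using Rcl kr t by auto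
    ultimately show "x \<in> J" using eq by blast
  qed
qed

lemma cs_left:
  assumes KI: "ideal_in UNIV K" and cs: "completely_simple K" and a: "a \<in> K"
    and J: "left_ideal_in K J" "J \<subseteq> {t*a | t. t \<in> K}"
  shows "{t*a | t. t \<in> K} \<subseteq> J"
proof -
  obtain L where L: "left_ideal_in K L" "\<And>L'. left_ideal_in K L' \<Longrightarrow> L' \<subseteq> L \<Longrightarrow> L' = L"
    using cs_L[OF cs] by blast
  have LK: "L \<subseteq> K" "L \<noteq> {}" and Lcl: "\<And>r t. r \<in> L \<Longrightarrow> t \<in> K \<Longrightarrow> t*r \<in> L"
    using L(1) unfolding left_ideal_in_def by auto
  let ?I = "{r*k | k r. k \<in> K \<and> r \<in> L}"
  have ne: "?I \<noteq> {}" using a LK by blast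
  have sub: "?I \<subseteq> K" using LK ideal_cl[OF KI] by blast
  have cl: "x*t \<in> ?I \<and> t*x \<in> ?I" if "x \<in> ?I" "t \<in> K" for x t
  proof -
    note hyp = that
    obtain k r where pq: "x = r*k" "k\<in>K" "r\<in>L" using hyp by blast
    have "x*t = r*(k*t)" "t*x = (t*r)*k" using pq by (simp_all add: mult.assoc)
    moreover have "t*r \<in> L" "k*t \<in> K" using pq hyp ideal_cl[OF KI] Lcl by auto
    ultimately show ?thesis using pq by blast
  qed
  have "ideal_in K ?I" unfolding ideal_in_def using ne sub cl by blast
  hence "?I = K" using cs_simple[OF cs] by blast
  then obtain k r where kr: "a = r*k" "k \<in> K" "r \<in> L" using a by blast
  let ?L' = "{r'\<in>L. r'*k \<in> J}"
  have Jne: "J \<noteq> {}" and Jcl: "\<And>j t. j \<in> J \<Longrightarrow> t \<in> K \<Longrightarrow> t*j \<in> J"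
    using J(1) unfolding left_ideal_in_def by auto
  have "?L' \<noteq> {}"
  proof -
    obtain j where "j \<in> J" using Jne by blast
    then obtain t where t: "j = t*a" "t \<in> K" using J(2) by blast
    have "j = (t*r)*k" using t kr by (simp add: mult.assoc)
    moreover have "t*r \<in> L" using Lcl kr t by auto
    ultimately show ?thesis using \<open>j \<in> J\<close> by blast
  qed
  moreover have "?L' \<subseteq> K" using LK by blast
  moreover have "t*x \<in> ?L'" if "x \<in> ?L'" "t \<in> K" for x t
  proof -
    note hyp = that
    have "(t*x)*k = t*(x*k)" by (simp add: mult.assoc)
    thus ?thesis using hyp Lcl Jcl by auto
  qed
  ultimately have "left_ideal_in K ?L'" unfolding left_ideal_in_def by blast
  hence eq: "?L' = L" using L(2) by blast
  show ?thesis
  proof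
    fix x assume "x \<in> {t*a | t. t \<in> K}"
    then obtain t where t: "x = t*a" "t \<in> K" by blast
    have "x = (t*r)*k" using t kr by (simp add: mult.assoc)
    moreover have "t*r \<in> L" using Lcl kr t by auto
    ultimately show "x \<in> J" using eq by blast
  qed
qed

lemma cs_self_right:
  assumes KI: "ideal_in UNIV K" and cs: "completely_simple K" and a: "a \<in> K"
  shows "\<exists>z\<in>K. a = a*z"
proof -
  obtain p q where pq: "p \<in> K" "q \<in> K" "a = p*a*q" using cs_pap[OF KI cs a] by blast
  let ?J = "{a*q*z | z. z \<in> K}"
  have "right_ideal_in K ?J"
  proof -
    have "?J \<noteq> {}" using pq by blast
    moreover have "?J \<subseteq> K" using a ideal_cl[OF KI] by blast
    moreover have "x*t \<in> ?J" if "x \<in> ?J" "t \<in> K" for x t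
    proof -
      note hyp = that
      obtain z where z: "x = a*q*z" "z \<in> K" using hyp by blast
      have "x*t = a*q*(z*t)" using z by (simp add: mult.assoc)
      thus ?thesis using z hyp ideal_cl[OF KI] by blast
    qed
    ultimately show ?thesis unfolding right_ideal_in_def by blast
  qed
  moreover have "?J \<subseteq> {a*t | t. t \<in> K}"
  proof
    fix x assume "x \<in> ?J"
    then obtain z where z: "x = a*q*z" "z \<in> K" by blast
    have "x = a*(q*z)" using z by (simp add: mult.assoc)
    thus "x \<in> {a*t | t. t \<in> K}" using z pq ideal_cl[OF KI] by blast
  qed
  ultimately have "{a*t | t. t \<in> K} \<subseteq> ?J" using cs_right[OF KI cs a] by blast
  hence "a*q \<in> ?J" using pq by blast
  then obtain z where z: "a*q = a*q*z" "z \<in> K" by blast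
  have "a = p*(a*q)" using pq by (simp add: mult.assoc)
  also have "\<dots> = p*(a*q*z)" using z by simp
  also have "\<dots> = (p*a*q)*z" by (simp add: mult.assoc)
  also have "\<dots> = a*z" using pq by simp
  finally show ?thesis using z by blast
qed

lemma cs_self_left:
  assumes KI: "ideal_in UNIV K" and cs: "completely_simple K" and a: "a \<in> K"
  shows "\<exists>z\<in>K. a = z*a"
proof -
  obtain p q where pq: "p \<in> K" "q \<in> K" "a = p*a*q" using cs_pap[OF KI cs a] by blast
  let ?J = "{z*p*a | z. z \<in> K}"
  have "left_ideal_in K ?J"
  proof -
    have "?J \<noteq> {}" using pq by blast
    moreover have "?J \<subseteq> K" using a ideal_cl[OF KI] by blast
    moreover have "t*x \<in> ?J" if "x \<in> ?J" "t \<in> K" for x t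
    proof -
      note hyp = that
      obtain z where z: "x = z*p*a" "z \<in> K" using hyp by blast
      have "t*x = (t*z)*p*a" using z by (simp add: mult.assoc)
      thus ?thesis using z hyp ideal_cl[OF KI] by blast
    qed
    ultimately show ?thesis unfolding left_ideal_in_def by blast
  qed
  moreover have "?J \<subseteq> {t*a | t. t \<in> K}"
  proof
    fix x assume "x \<in> ?J"
    then obtain z where z: "x = z*p*a" "z \<in> K" by blast
    thus "x \<in> {t*a | t. t \<in> K}" using z pq ideal_cl[OF KI] by blast
  qed
  ultimately have "{t*a | t. t \<in> K} \<subseteq> ?J" using cs_left[OF KI cs a] by blast
  hence "p*a \<in> ?J" using pq by blast
  then obtain z where z: "p*a = z*p*a" "z \<in> K" by blast
  have "a = (p*a)*q" using pq by (simp add: mult.assoc)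
  also have "\<dots> = (z*p*a)*q" using z by simp
  also have "\<dots> = z*(p*a*q)" by (simp add: mult.assoc)
  also have "\<dots> = z*a" using pq by simp
  finally show ?thesis using z by blast
qed

lemma cs_sq_right:
  assumes KI: "ideal_in UNIV K" and cs: "completely_simple K" and a: "a \<in> K"
  shows "\<exists>x\<in>K. a = a*a*x"
proof -
  let ?J = "{a*a*x | x. x \<in> K}"
  have "right_ideal_in K ?J"
  proof -
    have "?J \<noteq> {}" using a by blast
    moreover have "?J \<subseteq> K" using a ideal_cl[OF KI] by blast
    moreover have "x*t \<in> ?J" if "x \<in> ?J" "t \<in> K" for x t
    proof -
      note hyp = that
      obtain z where z: "x = a*a*z" "z \<in> K" using hyp by blast
      have "x*t = a*a*(z*t)" using z by (simp add: mult.assoc)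
      thus ?thesis using z hyp ideal_cl[OF KI] by blast
    qed
    ultimately show ?thesis unfolding right_ideal_in_def by blast
  qed
  moreover have "?J \<subseteq> {a*t | t. t \<in> K}"
  proof
    fix x assume "x \<in> ?J"
    then obtain z where z: "x = a*a*z" "z \<in> K" by blast
    have "x = a*(a*z)" using z by (simp add: mult.assoc)
    thus "x \<in> {a*t | t. t \<in> K}" using z a ideal_cl[OF KI] by blast
  qed
  ultimately have "{a*t | t. t \<in> K} \<subseteq> ?J" using cs_right[OF KI cs a] by blast
  moreover have "a \<in> {a*t | t. t \<in> K}" using cs_self_right[OF KI cs a] by blast
  ultimately show ?thesis by blast
qed

lemma cs_sq_left:
  assumes KI: "ideal_in UNIV K" and cs: "completely_simple K" and a: "a \<in> K"
  shows "\<exists>x\<in>K. a = x*a*a"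
proof -
  let ?J = "{x*a*a | x. x \<in> K}"
  have "left_ideal_in K ?J"
  proof -
    have "?J \<noteq> {}" using a by blast
    moreover have "?J \<subseteq> K" using a ideal_cl[OF KI] by blast
    moreover have "t*x \<in> ?J" if "x \<in> ?J" "t \<in> K" for x t
    proof -
      note hyp = that
      obtain z where z: "x = z*a*a" "z \<in> K" using hyp by blast
      have "t*x = (t*z)*a*a" using z by (simp add: mult.assoc)
      thus ?thesis using z hyp ideal_cl[OF KI] by blast
    qed
    ultimately show ?thesis unfolding left_ideal_in_def by blast
  qed
  moreover have "?J \<subseteq> {t*a | t. t \<in> K}"
  proof
    fix x assume "x \<in> ?J"
    then obtain z where z: "x = z*a*a" "z \<in> K" by blast
    thus "x \<in> {t*a | t. t \<in> K}" using z a ideal_cl[OF KI] by blast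
  qed
  ultimately have "{t*a | t. t \<in> K} \<subseteq> ?J" using cs_left[OF KI cs a] by blast
  moreover have "a \<in> {t*a | t. t \<in> K}" using cs_self_left[OF KI cs a] by blast
  ultimately show ?thesis by blast
qed

lemma cs_regular:
  assumes KI: "ideal_in UNIV K" and cs: "completely_simple K" and a: "a \<in> K"
  shows "\<exists>y\<in>K. a = a*y*a"
proof -
  obtain x where x: "x \<in> K" "a = a*a*x" using cs_sq_right[OF KI cs a] by blast
  obtain y where y: "y \<in> K" "a = y*a*a" using cs_sq_left[OF KI cs a] by blast
  have "y*a = y*(a*a*x)" using x by simp
  also have "\<dots> = (y*a*a)*x" by (simp add: mult.assoc)
  also have "\<dots> = a*x" using y by simp
  finally have yx: "y*a = a*x" .
  have "a*y*a = a*(y*a)" by (simp add: mult.assoc)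
  also have "\<dots> = a*a*x" using yx by (simp add: mult.assoc)
  also have "\<dots> = a" using x by simp
  finally have "a = a*y*a" by simp
  thus ?thesis using y(1) by blast
qed

lemma kernel_B:
  assumes KI: "ideal_in UNIV K" and cs: "completely_simple K" and bi: "bi_ideal B"
    and b: "b \<in> B" "b \<in> K" and t: "t \<in> B"
  shows "R_le B b (b*t)"
proof -
  let ?J = "{b*t*b*w | w. w \<in> K}"
  have "right_ideal_in K ?J"
  proof -
    have "?J \<noteq> {}" using b by blast
    moreover have "?J \<subseteq> K" using b ideal_cl[OF KI] by blast
    moreover have "x*s \<in> ?J" if "x \<in> ?J" "s \<in> K" for x s
    proof -
      note hyp = that
      obtain z where z: "x = b*t*b*z" "z \<in> K" using hyp by blast
      have "x*s = b*t*b*(z*s)" using z by (simp add: mult.assoc)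
      thus ?thesis using z hyp ideal_cl[OF KI] by blast
    qed
    ultimately show ?thesis unfolding right_ideal_in_def by blast
  qed
  moreover have "?J \<subseteq> {b*s | s. s \<in> K}"
  proof
    fix x assume "x \<in> ?J"
    then obtain z where z: "x = b*t*b*z" "z \<in> K" by blast
    have "x = b*(t*b*z)" using z by (simp add: mult.assoc)
    moreover have "t*b*z \<in> K" using b z ideal_cl[OF KI] by blast
    ultimately show "x \<in> {b*s | s. s \<in> K}" by blast
  qed
  ultimately have "{b*s | s. s \<in> K} \<subseteq> ?J" using cs_right[OF KI cs b(2)] by blast
  moreover have "b \<in> {b*s | s. s \<in> K}" using cs_self_right[OF KI cs b(2)] by blast
  ultimately obtain w where w: "b = b*t*b*w" by blast
  obtain y where y: "b = b*y*b" using cs_regular[OF KI cs b(2)] by blast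
  have "b = (b*t*b*w)*y*b" using w y by simp
  also have "\<dots> = (b*t)*(b*(w*y)*b)" by (simp add: mult.assoc)
  finally have "b = (b*t)*(b*(w*y)*b)" .
  moreover have "b*(w*y)*b \<in> B" using bi b unfolding bi_ideal_def by blast
  ultimately show ?thesis unfolding R_le_def by blast
qed


lemma R_le_trans_bi:
  assumes bi: "bi_ideal B" and xy: "R_le B x y" and yz: "R_le B y z"
  shows "R_le B x z"
proof -
  have cl: "\<And>u v. u\<in>B \<Longrightarrow> v\<in>B \<Longrightarrow> u*v \<in> B" using bi unfolding bi_ideal_def by blast
  from xy consider "x = y" | t where "t\<in>B" "x = y*t" unfolding R_le_def by blast
  then show ?thesis
  proof cases
    case 1 thus ?thesis using yz by simp
  next
    case (2 t)
    from yz consider "y = z" | t' where "t'\<in>B" "y = z*t'" unfolding R_le_def by blast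
    then show ?thesis
    proof cases
      case 1 thus ?thesis using 2 unfolding R_le_def by blast
    next
      case (2 t'')
      have "x = z*(t''*t)" using 2 \<open>x = y*t\<close> by (simp add: mult.assoc)
      moreover have "t''*t \<in> B" using cl 2 \<open>t\<in>B\<close> by blast
      ultimately show ?thesis unfolding R_le_def by blast
    qed
  qed
qed

lemma fin_min:
  assumes "finite E" "E \<noteq> {}" "\<And>x y z. r x y \<Longrightarrow> r y z \<Longrightarrow> r x z"
    "\<forall>x\<in>E. \<forall>y\<in>E. r x y \<or> r y x"
  shows "\<exists>m\<in>E. \<forall>x\<in>E. r m x"
  using assms(1,2,4)
proof (induction E rule: finite_ne_induct)
  case (singleton x) thus ?case by auto
next
  case (insert x F)
  then obtain m where m: "m \<in> F" "\<forall>y\<in>F. r m y" by auto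
  show ?case
  proof (cases "r m x")
    case True thus ?thesis using m by auto
  next
    case False
    hence "r x m" using insert.prems m by auto
    hence "\<forall>y\<in>F. r x y" using m assms(3) by blast
    moreover have "r x x" using insert.prems by auto
    ultimately show ?thesis by auto
  qed
qed

theorem corollary3p4:
  fixes B :: "'a::semigroup_mult set"
  assumes "R_height (UNIV :: 'a set) \<noteq> \<infinity>"
    and "\<exists>K :: 'a set. is_kernel K \<and> completely_simple K"
    and "bi_ideal B"
  shows "R_height B \<le> 3 * R_height (UNIV :: 'a set) - 2"
proof -
  obtain H where hH: "R_height (UNIV::'a set) = enat H"
    using assms(1) by (cases "R_height (UNIV::'a set)") auto
  obtain K :: "'a set" where kK: "is_kernel K" "completely_simple K" using assms(2) by blast
  have KI: "ideal_in UNIV K" using kK(1) unfolding is_kernel_def by blast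
  have Kne: "K \<noteq> {}" using KI unfolding ideal_in_def by blast
  have bcl: "\<And>u v. u\<in>B \<Longrightarrow> v\<in>B \<Longrightarrow> u*v \<in> B"
    and bcl2: "\<And>u v s. u\<in>B \<Longrightarrow> v\<in>B \<Longrightarrow> u*s*v \<in> B"
    using assms(3) unfolding bi_ideal_def by blast+
  have Utrans: "\<And>x y z. R_le (UNIV::'a set) x y \<Longrightarrow> R_le UNIV y z \<Longrightarrow> R_le UNIV x z"
    unfolding R_le_def by (metis UNIV_I mult.assoc)
  have Btrans: "\<And>x y z. R_le B x y \<Longrightarrow> R_le B y z \<Longrightarrow> R_le B x z"
    by (rule R_le_trans_bi[OF assms(3)])
  have BU: "\<And>x y. R_le B x y \<Longrightarrow> R_le UNIV x y" unfolding R_le_def by blast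
  have refl: "\<And>T x. R_le T x x" unfolding R_le_def by blast
  have Kdown: "\<And>x y. R_le UNIV x y \<Longrightarrow> y \<in> K \<Longrightarrow> x \<in> K"
    unfolding R_le_def using ideal_cl[OF KI] by blast
  have Schain: "card C \<le> H" if "C \<subseteq> R_classes UNIV" "finite C"
    "\<forall>X\<in>C. \<forall>Y\<in>C. R_class_le UNIV X Y \<or> R_class_le UNIV Y X" for C :: "'a set set"
  proof -
    have "enat (card C) \<le> R_height (UNIV::'a set)"
      unfolding R_height_def using that by (intro Sup_upper) blast
    thus ?thesis using hH by simp
  qed
  have key: "card E \<le> 3*H - 2" if E: "finite E" "E \<subseteq> B"
    "\<forall>x\<in>E. \<forall>y\<in>E. R_le B x y \<or> R_le B y x" "\<forall>x\<in>E. \<forall>y\<in>E. R_equiv B x y \<longrightarrow> x = y" for E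
  proof (cases "E = {}")
    case True thus ?thesis by simp
  next
    case False
    define f where "f x = {y \<in> (UNIV::'a set). R_equiv UNIV x y}" for x
    have feq: "f x = f y \<longleftrightarrow> R_equiv UNIV x y" for x y
    proof
      assume "f x = f y"
      moreover have "y \<in> f y" unfolding f_def R_equiv_def using refl by blast
      ultimately show "R_equiv UNIV x y" unfolding f_def by blast
    next
      assume "R_equiv UNIV x y"
      thus "f x = f y" unfolding f_def R_equiv_def using Utrans by blast
    qed
    have fin: "x \<in> f x" for x unfolding f_def R_equiv_def using refl by blast
    let ?A = "f ` E"
    have fclass: "?A \<subseteq> R_classes UNIV" unfolding R_classes_def f_def by blast
    have fchain: "\<forall>X\<in>?A. \<forall>Y\<in>?A. R_class_le UNIV X Y \<or> R_class_le UNIV Y X"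
    proof (intro ballI)
      fix X Y assume "X \<in> ?A" "Y \<in> ?A"
      then obtain x y where xy: "x \<in> E" "y \<in> E" "X = f x" "Y = f y" by blast
      hence "R_le UNIV x y \<or> R_le UNIV y x" using E(3) BU by blast
      thus "R_class_le UNIV X Y \<or> R_class_le UNIV Y X"
        unfolding R_class_le_def using xy fin by blast
    qed
    have mH: "card ?A \<le> H" using Schain fclass fchain E(1) by blast
    define F where "F Q = {x\<in>E. f x = Q}" for Q
    have Esum: "card E = (\<Sum>Q\<in>?A. card (F Q))"
    proof -
      have "E = (\<Union>Q\<in>?A. F Q)" unfolding F_def by auto
      moreover have "card (\<Union>Q\<in>?A. F Q) = (\<Sum>Q\<in>?A. card (F Q))"
        by (rule card_UN_disjoint) (use E(1) in \<open>auto simp: F_def\<close>)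
      ultimately show ?thesis by simp
    qed
    have fib3: "card (F Q) \<le> 3" for Q
    proof (rule ccontr)
      assume "\<not> card (F Q) \<le> 3"
      hence c4: "card (F Q) \<ge> 4" by simp
      have Ffin: "finite (F Q)" using E(1) unfolding F_def by simp
      have FE: "F Q \<subseteq> E" unfolding F_def by blast
      have tot: "\<forall>x\<in>G. \<forall>y\<in>G. R_le B x y \<or> R_le B y x" if "G \<subseteq> F Q" for G
        using that FE E(3) by blast
      have ne0: "F Q \<noteq> {}" using c4 by auto
      have "\<exists>m\<in>F Q. \<forall>x\<in>F Q. R_le B m x"
        by (rule fin_min[where r="R_le B"]) (use Ffin ne0 Btrans tot[of "F Q"] in auto)
      then obtain m0 where m0: "m0 \<in> F Q" "\<forall>x\<in>F Q. R_le B m0 x" by blast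
      define F1 where "F1 = F Q - {m0}"
      have c1: "card F1 \<ge> 3" unfolding F1_def using c4 m0(1) Ffin by simp
      have F1fin: "finite F1" using Ffin unfolding F1_def by simp
      have ne1: "F1 \<noteq> {}" using c1 by auto
      have "\<exists>m\<in>F1. \<forall>x\<in>F1. R_le B m x"
        by (rule fin_min[where r="R_le B"]) (use F1fin ne1 Btrans tot[of F1] in \<open>auto simp: F1_def\<close>)
      then obtain m1 where m1: "m1 \<in> F1" "\<forall>x\<in>F1. R_le B m1 x" by blast
      define F2 where "F2 = F1 - {m1}"
      have c2: "card F2 \<ge> 2" unfolding F2_def using c1 m1(1) F1fin by simp
      have F2fin: "finite F2" using F1fin unfolding F2_def by simp
      have ne2: "F2 \<noteq> {}" using c2 by auto
      have "\<exists>m\<in>F2. \<forall>x\<in>F2. R_le B m x"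
        by (rule fin_min[where r="R_le B"]) (use F2fin ne2 Btrans tot[of F2] in \<open>auto simp: F2_def F1_def\<close>)
      then obtain m2 where m2: "m2 \<in> F2" "\<forall>x\<in>F2. R_le B m2 x" by blast
      define F3 where "F3 = F2 - {m2}"
      have c3: "card F3 \<ge> 1" unfolding F3_def using c2 m2(1) F2fin by simp
      then obtain m3 where m3: "m3 \<in> F3" by (metis card.empty equals0I not_one_le_zero)
      have mem: "m0 \<in> F Q" "m1 \<in> F Q" "m2 \<in> F Q" "m3 \<in> F Q"
        using m0 m1 m2 m3 unfolding F3_def F2_def F1_def by auto
      have dist: "m1 \<noteq> m2" "m2 \<noteq> m3" "m0 \<noteq> m1"
        using m0 m1 m2 m3 unfolding F3_def F2_def F1_def by auto
      have l01: "R_le B m0 m1" using m0 mem by blast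
      have l12: "R_le B m1 m2" using m1 m2 unfolding F2_def by blast
      have l23: "R_le B m2 m3" using m2 m3 unfolding F3_def by blast
      have "f m3 = f m0" using mem unfolding F_def by simp
      hence "R_le UNIV m3 m0" using feq unfolding R_equiv_def by blast
      obtain t1 where t1: "t1 \<in> B" "m2 = m3*t1" using l23 dist unfolding R_le_def by blast
      obtain t2 where t2: "t2 \<in> B" "m1 = m2*t2" using l12 dist unfolding R_le_def by blast
      obtain t3 where t3: "t3 \<in> B" "m0 = m1*t3" using l01 dist unfolding R_le_def by blast
      have "R_le B m2 m1"
      proof -
        from \<open>R_le UNIV m3 m0\<close> consider "m3 = m0" | s where "m3 = m0*s" unfolding R_le_def by blast
        thus ?thesis
        proof cases
          case 1
          hence "m2 = m1*(t3*t1)" using t1 t3 by (simp add: mult.assoc)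
          moreover have "t3*t1 \<in> B" using bcl t1 t3 by blast
          ultimately show ?thesis unfolding R_le_def by blast
        next
          case (2 s)
          hence "m2 = m1*(t3*s*t1)" using t1 t3 by (simp add: mult.assoc)
          moreover have "t3*s*t1 \<in> B" using bcl2 t1 t3 by blast
          ultimately show ?thesis unfolding R_le_def by blast
        qed
      qed
      hence "R_equiv B m1 m2" using l12 unfolding R_equiv_def by blast
      hence "m1 = m2" using E(4) mem FE by blast
      with dist show False by blast
    qed
    obtain x0 where x0: "x0\<in>E" "\<forall>x\<in>E. R_le B x0 x"
      using fin_min[where r="R_le B", OF E(1) False _ E(3)] Btrans by blast
    have Afin: "finite ?A" using E(1) by simp
    have sum3: "(\<Sum>Q\<in>S. card (F Q)) \<le> 3 * card S" for S
    proof -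
      have "(\<Sum>Q\<in>S. card (F Q)) \<le> (\<Sum>Q\<in>S. 3)" by (rule sum_mono) (use fib3 in auto)
      thus ?thesis by simp
    qed
    show ?thesis
    proof (cases "x0 \<in> K")
      case True
      have fib1: "card (F (f x0)) \<le> 1"
      proof -
        have "F (f x0) \<subseteq> {x0}"
        proof
          fix x assume "x \<in> F (f x0)"
          hence x: "x \<in> E" "R_equiv UNIV x x0" unfolding F_def using feq by auto
          hence xK: "x \<in> K" using Kdown True unfolding R_equiv_def by blast
          have xB: "x \<in> B" using x E(2) by blast
          have l: "R_le B x0 x" using x0 x by blast
          have "R_le B x x0"
          proof -
            from l consider "x0 = x" | t where "t\<in>B" "x0 = x*t" unfolding R_le_def by blast
            thus ?thesis
            proof cases
              case 1 thus ?thesis using refl by simp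
            next
              case (2 t)
              thus ?thesis using kernel_B[OF KI kK(2) assms(3) xB xK 2(1)] by simp
            qed
          qed
          hence "R_equiv B x x0" using l unfolding R_equiv_def by blast
          thus "x \<in> {x0}" using E(4) x x0 by blast
        qed
        hence "card (F (f x0)) \<le> card {x0}" by (intro card_mono) auto
        thus ?thesis by simp
      qed
      have "card E = card (F (f x0)) + (\<Sum>Q\<in>?A - {f x0}. card (F Q))"
        using Esum sum.remove[OF Afin, of "f x0"] x0(1) by simp
      also have "\<dots> \<le> 1 + 3 * card (?A - {f x0})" using fib1 sum3 by (intro add_mono) auto
      also have "card (?A - {f x0}) = card ?A - 1" using x0(1) Afin by simp
      finally have "card E \<le> 1 + 3 * (card ?A - 1)" .
      moreover have "card ?A \<ge> 1" using x0(1) Afin by (metis One_nat_def Suc_leI card_gt_0_iff empty_iff image_eqI)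
      ultimately show ?thesis using mH by linarith
    next
      case False
      obtain k where kK': "k \<in> K" using Kne by blast
      define z where "z = x0*k"
      have zK: "z \<in> K" using ideal_cl[OF KI kK'] z_def by simp
      have zle: "R_le UNIV z x" if "x\<in>E" for x
      proof -
        have "R_le UNIV z x0" unfolding z_def R_le_def by blast
        moreover have "R_le UNIV x0 x" using BU x0 that by blast
        ultimately show ?thesis using Utrans by blast
      qed
      have znot: "f z \<notin> ?A"
      proof
        assume "f z \<in> ?A"
        then obtain x where x: "x\<in>E" "f z = f x" by blast
        hence "R_equiv UNIV z x" using feq by blast
        hence "x \<in> K" using Kdown zK unfolding R_equiv_def by blast
        hence "x0 \<in> K" using Kdown BU x0 x(1) by blast
        with False show False by blast
      qed
      have "card (insert (f z) ?A) \<le> H"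
      proof (rule Schain)
        show "insert (f z) ?A \<subseteq> R_classes UNIV" using fclass unfolding R_classes_def f_def by blast
        show "finite (insert (f z) ?A)" using Afin by simp
        show "\<forall>X\<in>insert (f z) ?A. \<forall>Y\<in>insert (f z) ?A. R_class_le UNIV X Y \<or> R_class_le UNIV Y X"
        proof (intro ballI)
          have zc: "R_class_le UNIV (f z) Y" if hY: "Y \<in> ?A" for Y
          proof -
            obtain x where "x \<in> E" "Y = f x" using hY by blast
            thus ?thesis unfolding R_class_le_def using fin zle by blast
          qed
          fix X Y assume "X \<in> insert (f z) ?A" "Y \<in> insert (f z) ?A"
          thus "R_class_le UNIV X Y \<or> R_class_le UNIV Y X"
          proof -
            have zz: "R_class_le UNIV (f z) (f z)" unfolding R_class_le_def using fin refl by blast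
            show ?thesis using \<open>X \<in> insert (f z) ?A\<close> \<open>Y \<in> insert (f z) ?A\<close> fchain zc zz by blast
          qed
        qed
      qed
      hence "card ?A + 1 \<le> H" using znot Afin by simp
      moreover have "card E \<le> 3 * card ?A" using Esum sum3 by simp
      ultimately show ?thesis by linarith
    qed
  qed
  have chainB: "card C \<le> 3*H-2" if C: "C \<subseteq> R_classes B" "finite C"
    "\<forall>X\<in>C. \<forall>Y\<in>C. R_class_le B X Y \<or> R_class_le B Y X" for C
  proof -
    have cls: "X = {y\<in>B. R_equiv B x y} \<and> x \<in> B" if "X \<in> R_classes B" "x \<in> X" for X x
    proof -
      from that obtain x1 where X: "X = {y\<in>B. R_equiv B x1 y}" "x1 \<in> B"
        unfolding R_classes_def by blast
      with that have e: "R_equiv B x1 x" "x \<in> B" by auto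
      have "X = {y\<in>B. R_equiv B x y}"
        unfolding X(1) using e Btrans unfolding R_equiv_def by blast
      thus ?thesis using e by blast
    qed
    have nonempty: "\<exists>x. x \<in> X" if "X \<in> R_classes B" for X
      using that unfolding R_classes_def R_equiv_def using refl by blast
    define rep where "rep X = (SOME x. x \<in> X)" for X :: "'a set"
    have rep: "rep X \<in> X" if "X \<in> C" for X
      using nonempty[of X] that C(1) unfolding rep_def by (meson someI_ex subsetD)
    have repc: "X = {y\<in>B. R_equiv B (rep X) y}" "rep X \<in> B" if "X \<in> C" for X
      using cls[of X "rep X"] rep[OF that] C(1) that by blast+
    have inj: "inj_on rep C"
    proof (rule inj_onI)
      fix X Y assume "X \<in> C" "Y \<in> C" "rep X = rep Y"
      thus "X = Y" using repc by metis
    qed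
    let ?E = "rep ` C"
    have "card ?E = card C" by (rule card_image[OF inj])
    moreover have "card ?E \<le> 3*H-2"
    proof (rule key)
      show "finite ?E" using C(2) by simp
      show "?E \<subseteq> B" using repc by blast
      have le: "R_le B (rep X) (rep Y)" if "R_class_le B X Y" "X\<in>C" "Y\<in>C" for X Y
      proof -
        from that obtain x' y' where xy: "x'\<in>X" "y'\<in>Y" "R_le B x' y'"
          unfolding R_class_le_def by blast
        have "R_equiv B (rep X) x'" using repc[OF that(2)] xy(1) by blast
        moreover have "R_equiv B (rep Y) y'" using repc[OF that(3)] xy(2) by blast
        ultimately show ?thesis using xy(3) Btrans unfolding R_equiv_def by blast
      qed
      show "\<forall>x\<in>?E. \<forall>y\<in>?E. R_le B x y \<or> R_le B y x"
      proof (intro ballI)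
        fix x y assume "x\<in>?E" "y\<in>?E"
        then obtain X Y where XY: "X\<in>C" "Y\<in>C" "x = rep X" "y = rep Y" by blast
        from C(3) XY le show "R_le B x y \<or> R_le B y x" by blast
      qed
      show "\<forall>x\<in>?E. \<forall>y\<in>?E. R_equiv B x y \<longrightarrow> x = y"
      proof (intro ballI impI)
        fix x y assume "x\<in>?E" "y\<in>?E" and e: "R_equiv B x y"
        then obtain X Y where XY: "X\<in>C" "Y\<in>C" "x = rep X" "y = rep Y" by blast
        have "{z\<in>B. R_equiv B x z} = {z\<in>B. R_equiv B y z}"
          using e Btrans unfolding R_equiv_def by blast
        hence "X = Y" using repc XY by metis
        thus "x = y" using XY by simp
      qed
    qed
    ultimately show ?thesis by simp
  qed
  have "R_height B \<le> enat (3*H-2)"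
    unfolding R_height_def using chainB by (auto intro!: Sup_least)
  moreover have "3 * R_height (UNIV::'a set) - 2 = enat (3*H-2)"
    using hH by (simp add: numeral_eq_enat)
  ultimately show ?thesis by simp
qed

end
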